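(* Let $\mathbf X\in\mathbb R^{n\times p}$, $\boldsymbol\beta\in\mathbb R^p$ with support $S=\{j:\beta_j\neq0\}$, $\sigma>0$, and let $\check{\boldsymbol\beta}\in\mathbb R^p$ satisfy $\mathrm{sgn}(\check{\boldsymbol\beta})=\mathrm{sgn}(\boldsymbol\beta)$ componentwise. For $t\in[0,1)$ and $\lambda>0$ let $\Lambda_{\lambda,t}$ be the set of $\boldsymbol\zeta\in\mathbb R^n$ for which there is a Lasso solution $\hat{\boldsymbol\beta}=\hat{\boldsymbol\beta}_\lambda(\boldsymbol\beta,\sigma\boldsymbol\zeta)$ with $\mathrm{sgn}(\hat{\boldsymbol\beta}_S)=\mathrm{sgn}(\boldsymbol\beta_S)$ and $\min_{j\in S}\hat\beta_j/\beta_j>t$. Suppose $\check\sigma>0$ satisfies $$0<\check\sigma/\sigma<\min_{j\in S}\frac{\check\beta_j}{(1-t)\beta_j}.$$ Then for every $\boldsymbol\zeta\in\Lambda_{\lambda,t}$ for which the residuals below are well-defined (nonzero denominators), $\hat{\mathbf R}_\lambda(\boldsymbol\beta,\sigma\boldsymbol\zeta)=\hat{\mathbf R}_\lambda(\check{\boldsymbol\beta},\check\sigma\boldsymbol\zeta)$.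
   Context: For $\mathbf b_0\in\mathbb R^p$, $\mathbf w\in\mathbb R^n$ and $\lambda>0$, a (square-root) Lasso solution is any $\hat{\boldsymbol\beta}_\lambda(\mathbf b_0,\mathbf w)\in\arg\min_{\mathbf b\in\mathbb R^p}\{\|\mathbf X(\mathbf b_0-\mathbf b)+\mathbf w\|_2/\sqrt n+\lambda\|\mathbf b\|_1\}$, i.e. a square-root Lasso fit of the response $\mathbf X\mathbf b_0+\mathbf w$ on $\mathbf X$; the fitted values $\mathbf X\hat{\boldsymbol\beta}_\lambda$ are unique even if the minimiser is not. The scaled Lasso residuals are $\hat{\mathbf R}_\lambda(\mathbf b_0,\mathbf w)=\{\mathbf X(\mathbf b_0-\hat{\boldsymbol\beta}_\lambda(\mathbf b_0,\mathbf w))+\mathbf w\}/\|\mathbf X(\mathbf b_0-\hat{\boldsymbol\beta}_\lambda(\mathbf b_0,\mathbf w))+\mathbf w\|_2$. For a vector $\mathbf b$ and $A\subseteq\{1,\dots,p\}$, $\mathbf b_A$ is the subvector indexed by $A$; $\mathrm{sgn}$ is applied componentwise. *)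

theory Defs
  imports "HOL-Analysis.Analysis"
begin

definition l1norm :: "real^'p \<Rightarrow> real" where
  "l1norm b = (\<Sum>j\<in>UNIV. \<bar>b $ j\<bar>)"

text \<open>Square-root Lasso objective for response X b0 + w.\<close>
definition sqrt_lasso_obj ::
  "real^'p^'n \<Rightarrow> real \<Rightarrow> real^'p \<Rightarrow> real^'n \<Rightarrow> real^'p \<Rightarrow> real" where
  "sqrt_lasso_obj X lam b0 w b =
     norm (X *v (b0 - b) + w) / sqrt (real CARD('n)) + lam * l1norm b"

definition is_lasso_sol ::
  "real^'p^'n \<Rightarrow> real \<Rightarrow> real^'p \<Rightarrow> real^'n \<Rightarrow> real^'p \<Rightarrow> bool" where
  "is_lasso_sol X lam b0 w b \<longleftrightarrow>
     (\<forall>b'. sqrt_lasso_obj X lam b0 w b \<le> sqrt_lasso_obj X lam b0 w b')"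

text \<open>Unscaled residual X(b0 - b) + w for a candidate solution b.\<close>
definition lasso_resid ::
  "real^'p^'n \<Rightarrow> real^'p \<Rightarrow> real^'n \<Rightarrow> real^'p \<Rightarrow> real^'n" where
  "lasso_resid X b0 w b = X *v (b0 - b) + w"

definition supp :: "real^'p \<Rightarrow> 'p set" where
  "supp b = {j. b $ j \<noteq> 0}"

definition Lambda_set ::
  "real^'p^'n \<Rightarrow> real \<Rightarrow> real \<Rightarrow> real^'p \<Rightarrow> real \<Rightarrow> (real^'n) set" where
  "Lambda_set X lam t beta sig =
     {zeta. \<exists>bh. is_lasso_sol X lam beta (sig *\<^sub>R zeta) bh
              \<and> (\<forall>j\<in>supp beta. sgn (bh $ j) = sgn (beta $ j))
              \<and> (\<forall>j\<in>supp beta. bh $ j / beta $ j > t)}"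

end

theory Submission
  imports Defs
begin

lemma l1_conv:
  fixes x y :: "real^'p"
  assumes "0 \<le> e" "e \<le> 1"
  shows "l1norm ((1-e) *\<^sub>R x + e *\<^sub>R y) \<le> (1-e) * l1norm x + e * l1norm y"
proof -
  have "l1norm ((1-e) *\<^sub>R x + e *\<^sub>R y) \<le> (\<Sum>j\<in>UNIV. (1-e) * \<bar>x$j\<bar> + e * \<bar>y$j\<bar>)"
    unfolding l1norm_def
  proof (rule sum_mono)
    fix j
    have "\<bar>(1-e) * x$j + e * y$j\<bar> \<le> \<bar>(1-e) * x$j\<bar> + \<bar>e * y$j\<bar>" by (rule abs_triangle_ineq)
    also have "\<dots> = (1-e) * \<bar>x$j\<bar> + e * \<bar>y$j\<bar>" using assms by (simp add: abs_mult)
    finally show "\<bar>((1-e) *\<^sub>R x + e *\<^sub>R y)$j\<bar> \<le> (1-e) * \<bar>x$j\<bar> + e * \<bar>y$j\<bar>" by simp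
  qed
  also have "\<dots> = (1-e) * l1norm x + e * l1norm y"
    unfolding l1norm_def by (simp add: sum.distrib sum_distrib_left)
  finally show ?thesis .
qed

lemma resid_lin:
  fixes X :: "real^'p^'n"
  shows "X *v (b0 - ((1-e) *\<^sub>R x + e *\<^sub>R y)) + w
     = (1-e) *\<^sub>R (X *v (b0 - x) + w) + e *\<^sub>R (X *v (b0 - y) + w)"
  by (simp add: vec.diff vec.add vec.scale algebra_simps)

lemma aux: "((1-e)*A + e*B)/(q::real) + lam*((1-e)*L1 + e*L2) = (1-e)*(A/q + lam*L1) + e*(B/q + lam*L2)"
  by (simp add: add_divide_distrib diff_divide_distrib algebra_simps)

lemma obj_conv:
  fixes X :: "real^'p^'n"
  assumes "0 \<le> e" "e \<le> 1" "0 \<le> lam"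
  shows "sqrt_lasso_obj X lam b0 w ((1-e) *\<^sub>R x + e *\<^sub>R y)
      \<le> (1-e) * sqrt_lasso_obj X lam b0 w x + e * sqrt_lasso_obj X lam b0 w y"
proof -
  let ?r = "X *v (b0 - x) + w" and ?s = "X *v (b0 - y) + w"
  let ?q = "sqrt (real CARD('n))"
  have q: "?q > 0" by simp
  have n: "norm ((1-e) *\<^sub>R ?r + e *\<^sub>R ?s) \<le> (1-e) * norm ?r + e * norm ?s"
    using norm_triangle_ineq[of "(1-e) *\<^sub>R ?r" "e *\<^sub>R ?s"] assms by simp
  have "sqrt_lasso_obj X lam b0 w ((1-e) *\<^sub>R x + e *\<^sub>R y)
      = norm ((1-e) *\<^sub>R ?r + e *\<^sub>R ?s) / ?q + lam * l1norm ((1-e) *\<^sub>R x + e *\<^sub>R y)"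
    unfolding sqrt_lasso_obj_def resid_lin ..
  also have "\<dots> \<le> ((1-e) * norm ?r + e * norm ?s) / ?q + lam * ((1-e) * l1norm x + e * l1norm y)"
    using n q mult_left_mono[OF l1_conv[OF assms(1,2)] assms(3)]
    by (intro add_mono divide_right_mono) auto
  also have "\<dots> = (1-e) * sqrt_lasso_obj X lam b0 w x + e * sqrt_lasso_obj X lam b0 w y"
    unfolding sqrt_lasso_obj_def by (rule aux)
  finally show ?thesis .
qed

lemma sol_parallel:
  fixes X :: "real^'p^'n"
  assumes "is_lasso_sol X lam b0 w b" "is_lasso_sol X lam b0 w b'" "0 \<le> lam"
  shows "norm (lasso_resid X b0 w b) *\<^sub>R lasso_resid X b0 w b'
       = norm (lasso_resid X b0 w b') *\<^sub>R lasso_resid X b0 w b"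
proof -
  let ?r = "lasso_resid X b0 w b" and ?s = "lasso_resid X b0 w b'"
  let ?q = "sqrt (real CARD('n))"
  let ?m = "(1 - 1/2) *\<^sub>R b + (1/2) *\<^sub>R b'"
  have q: "?q > 0" by simp
  have e1: "sqrt_lasso_obj X lam b0 w b \<le> sqrt_lasso_obj X lam b0 w ?m"
    using assms(1) unfolding is_lasso_sol_def by blast
  have e2: "sqrt_lasso_obj X lam b0 w b \<le> sqrt_lasso_obj X lam b0 w b'"
    using assms(1) unfolding is_lasso_sol_def by blast
  have e3: "sqrt_lasso_obj X lam b0 w b' \<le> sqrt_lasso_obj X lam b0 w b"
    using assms(2) unfolding is_lasso_sol_def by blast
  have l: "lam * l1norm ?m \<le> lam * ((1 - 1/2) * l1norm b + (1/2) * l1norm b')"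
    using l1_conv[of "1/2" b b'] assms(3) by (simp add: mult_left_mono)
  have rm: "X *v (b0 - ?m) + w = (1/2) *\<^sub>R (?r + ?s)"
    unfolding resid_lin lasso_resid_def by (simp add: algebra_simps)
  have "norm (?r + ?s) / 2 / ?q + lam * l1norm ?m \<ge>
     (norm ?r / ?q + lam * l1norm b + norm ?s / ?q + lam * l1norm b') / 2"
    using e1 e2 e3 unfolding sqrt_lasso_obj_def rm lasso_resid_def by simp
  with l have "norm (?r + ?s) / 2 / ?q \<ge> (norm ?r + norm ?s) / 2 / ?q"
    by (simp add: algebra_simps add_divide_distrib)
  with q have "norm (?r + ?s) \<ge> norm ?r + norm ?s"
    by (simp add: divide_le_cancel)
  with norm_triangle_ineq[of ?r ?s] have "norm (?r + ?s) = norm ?r + norm ?s" by linarith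
  thus ?thesis using norm_triangle_eq by blast
qed

lemma normalize_eq:
  fixes x y :: "'a::real_normed_vector"
  assumes "x \<noteq> 0" "y \<noteq> 0" "norm x *\<^sub>R y = norm y *\<^sub>R x"
  shows "(1 / norm x) *\<^sub>R x = (1 / norm y) *\<^sub>R y"
proof -
  have "(1 / (norm x * norm y)) *\<^sub>R (norm x *\<^sub>R y) = (1 / (norm x * norm y)) *\<^sub>R (norm y *\<^sub>R x)"
    using assms(3) by simp
  thus ?thesis using assms(1,2) by simp
qed

lemma coord:
  fixes c t b bc x :: real
  assumes "c > 0" "t \<ge> 0" "t < 1" "b \<noteq> 0" "t < x / b"
    "c < bc / ((1-t)*b)"
  shows "\<bar>c*x + (bc - c*b)\<bar> = c*\<bar>x\<bar> + sgn b * (bc - c*b)"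
proof (cases "b > 0")
  case True
  have xb: "t*b < x" using assms(5) True by (simp add: pos_less_divide_eq)
  have p: "(1-t)*b > 0" using True assms(3) by simp
  have cb: "c*((1-t)*b) < bc" using assms(6) p by (simp add: pos_less_divide_eq)
  have "c*(b-x) < c*((1-t)*b)" using xb assms(1)
    by (intro mult_strict_left_mono) (auto simp: algebra_simps)
  hence "c*x + (bc - c*b) > 0" using cb by (simp add: algebra_simps)
  moreover have "x > 0" using xb assms(2) True by (smt (verit) mult_nonneg_nonneg)
  ultimately show ?thesis using True by simp
next
  case False
  hence bn: "b < 0" using assms(4) by simp
  have xb: "x < t*b" using assms(5) bn by (simp add: neg_less_divide_eq)
  have p: "(1-t)*b < 0" using bn assms(3) by (simp add: mult_pos_neg)
  have cb: "bc < c*((1-t)*b)" using assms(6) p by (simp add: neg_less_divide_eq)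
  have "c*((1-t)*b) < c*(b-x)" using xb assms(1)
    by (intro mult_strict_left_mono) (auto simp: algebra_simps)
  hence "c*x + (bc - c*b) < 0" using cb by (simp add: algebra_simps)
  moreover have "x < 0" using xb assms(2) bn by (smt (verit) mult_nonneg_nonpos)
  ultimately show ?thesis using bn by simp
qed

lemma Q_eventually:
  fixes f :: "real \<Rightarrow> real^'p"
  assumes "\<forall>j\<in>supp beta. t < y$j / beta$j" "(f \<longlongrightarrow> y) (at_right 0)"
  shows "eventually (\<lambda>e. \<forall>j\<in>supp beta. t < f e $ j / beta $ j) (at_right 0)"
proof -
  have "\<And>j. eventually (\<lambda>e. j \<in> supp beta \<longrightarrow> t < f e $ j / beta $ j) (at_right 0)"
  proof -
    fix j
    show "eventually (\<lambda>e. j \<in> supp beta \<longrightarrow> t < f e $ j / beta $ j) (at_right 0)"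
    proof (cases "j \<in> supp beta")
      case True
      have "((\<lambda>e. f e $ j / beta $ j) \<longlongrightarrow> y $ j / beta $ j) (at_right 0)"
        using True by (intro tendsto_intros tendsto_vec_nth assms(2)) (simp add: supp_def)
      from order_tendstoD(1)[OF this] True assms(1)
      show ?thesis by (auto elim: eventually_mono)
    qed simp
  qed
  hence "eventually (\<lambda>e. \<forall>j. j \<in> supp beta \<longrightarrow> t < f e $ j / beta $ j) (at_right 0)"
    by (rule eventually_all_finite)
  thus ?thesis by (auto elim: eventually_mono)
qed

theorem theorem1:
  fixes X :: "real^'p^'n" and beta betac :: "real^'p" and zeta :: "real^'n"
    and sig sigc lam t :: real and b1 b2 :: "real^'p"
  assumes "sig > 0"
    and "\<forall>j. sgn (betac $ j) = sgn (beta $ j)"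
    and "0 \<le> t" and "t < 1" and "lam > 0"
    and "sigc > 0"
    and "0 < sigc / sig"
    and "\<forall>j\<in>supp beta. sigc / sig < betac $ j / ((1 - t) * beta $ j)"
    and "zeta \<in> Lambda_set X lam t beta sig"
    and "is_lasso_sol X lam beta (sig *\<^sub>R zeta) b1"
    and "is_lasso_sol X lam betac (sigc *\<^sub>R zeta) b2"
    and "lasso_resid X beta (sig *\<^sub>R zeta) b1 \<noteq> 0"
    and "lasso_resid X betac (sigc *\<^sub>R zeta) b2 \<noteq> 0"
  shows "(1 / norm (lasso_resid X beta (sig *\<^sub>R zeta) b1)) *\<^sub>R lasso_resid X beta (sig *\<^sub>R zeta) b1
       = (1 / norm (lasso_resid X betac (sigc *\<^sub>R zeta) b2)) *\<^sub>R lasso_resid X betac (sigc *\<^sub>R zeta) b2"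
proof -
  define c where "c = sigc / sig"
  define w where "w = sig *\<^sub>R zeta"
  define d where "d = betac - c *\<^sub>R beta"
  define K0 where "K0 = (\<Sum>j\<in>UNIV. sgn (beta$j) * d$j)"
  define Q where "Q x \<longleftrightarrow> (\<forall>j\<in>supp beta. t < x$j / beta$j)" for x :: "real^'p"
  have c0: "c > 0" using assms(7) c_def by simp
  have wc: "sigc *\<^sub>R zeta = c *\<^sub>R w" using assms(1) unfolding c_def w_def by simp
  let ?f = "sqrt_lasso_obj X lam beta w"
  let ?G = "sqrt_lasso_obj X lam betac (c *\<^sub>R w)"
  obtain bh where bh: "is_lasso_sol X lam beta w bh" "Q bh"
    using assms(9) unfolding Lambda_set_def Q_def w_def by auto
  have l1shift: "l1norm (c *\<^sub>R x + d) = c * l1norm x + K0" if "Q x" for x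
  proof -
    have "\<bar>c * x$j + d$j\<bar> = c * \<bar>x$j\<bar> + sgn (beta$j) * d$j" for j
    proof (cases "beta$j = 0")
      case True
      hence "betac$j = 0" using assms(2) by (metis sgn_0_0)
      thus ?thesis using True c0 by (simp add: d_def abs_mult)
    next
      case False
      hence js: "j \<in> supp beta" by (simp add: supp_def)
      show ?thesis unfolding d_def using coord[OF c0 assms(3,4) False, of "x$j" "betac$j"]
        that js assms(8) unfolding Q_def c_def by simp
    qed
    thus ?thesis unfolding l1norm_def K0_def by (simp add: sum.distrib sum_distrib_left)
  qed
  have residshift: "X *v (betac - (c *\<^sub>R x + d)) + c *\<^sub>R w = c *\<^sub>R (X *v (beta - x) + w)" for x
  proof -
    have "betac - (c *\<^sub>R x + d) = c *\<^sub>R (beta - x)" unfolding d_def by (simp add: algebra_simps)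
    thus ?thesis by (simp add: matrix_vector_mult_scaleR scaleR_right_distrib)
  qed
  have objshift: "?G (c *\<^sub>R x + d) = c * ?f x + lam * K0" if "Q x" for x
    unfolding sqrt_lasso_obj_def residshift norm_scaleR l1shift[OF that] using c0
    by (simp add: algebra_simps)
  let ?r1 = "lasso_resid X beta w b1"
  have r1: "?r1 \<noteq> 0" using assms(12) w_def by simp
  have b1s: "is_lasso_sol X lam beta w b1" using assms(10) w_def by simp
  have "((\<lambda>s. (1-s) *\<^sub>R bh + s *\<^sub>R b1) \<longlongrightarrow> (1-0) *\<^sub>R bh + 0 *\<^sub>R b1) (at_right 0)"
    by (intro tendsto_intros)
  hence "((\<lambda>s. (1-s) *\<^sub>R bh + s *\<^sub>R b1) \<longlongrightarrow> bh) (at_right 0)" by simp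
  from Q_eventually[OF bh(2)[unfolded Q_def] this]
    eventually_at_right_real[of 0 1]
  have "eventually (\<lambda>s. Q ((1-s) *\<^sub>R bh + s *\<^sub>R b1) \<and> s \<in> {0<..<1}) (at_right 0)"
    unfolding Q_def by (auto intro: eventually_conj)
  then obtain s where s: "Q ((1-s) *\<^sub>R bh + s *\<^sub>R b1)" "0 < s" "s < 1"
    using eventually_happens'[OF trivial_limit_at_right_real] by fastforce
  define u where "u = (1-s) *\<^sub>R bh + s *\<^sub>R b1"
  have Qu: "Q u" using s u_def by simp
  have us: "is_lasso_sol X lam beta w u"
    unfolding is_lasso_sol_def
  proof
    fix b'
    have "?f u \<le> (1-s) * ?f bh + s * ?f b1"
      unfolding u_def using obj_conv[of s lam] s assms(5) by simp
    also have "\<dots> \<le> (1-s) * ?f b' + s * ?f b'"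
      using bh(1) b1s s unfolding is_lasso_sol_def
      by (intro add_mono mult_left_mono) auto
    finally show "?f u \<le> ?f b'" by (simp add: algebra_simps)
  qed
  define a where "a = norm (lasso_resid X beta w bh) / norm ?r1"
  have a0: "a \<ge> 0" unfolding a_def by simp
  have par: "norm (lasso_resid X beta w bh) *\<^sub>R ?r1 = norm ?r1 *\<^sub>R lasso_resid X beta w bh"
    using sol_parallel[OF bh(1) b1s] assms(5) by simp
  have Rh: "lasso_resid X beta w bh = a *\<^sub>R ?r1"
  proof -
    have "(1/norm ?r1) *\<^sub>R (norm (lasso_resid X beta w bh) *\<^sub>R ?r1)
        = (1/norm ?r1) *\<^sub>R (norm ?r1 *\<^sub>R lasso_resid X beta w bh)" using par by simp
    thus ?thesis using r1 unfolding a_def by simp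
  qed
  define k where "k = (1-s)*a + s"
  have k0: "k > 0" unfolding k_def using a0 s by (smt (verit) mult_nonneg_nonneg)
  have Ru: "lasso_resid X beta w u = k *\<^sub>R ?r1"
  proof -
    have "lasso_resid X beta w u = (1-s) *\<^sub>R lasso_resid X beta w bh + s *\<^sub>R ?r1"
      unfolding u_def lasso_resid_def by (rule resid_lin)
    also have "\<dots> = (1-s) *\<^sub>R (a *\<^sub>R ?r1) + s *\<^sub>R ?r1" using Rh by simp
    also have "\<dots> = k *\<^sub>R ?r1" by (simp add: k_def scaleR_add_left)
    finally show ?thesis .
  qed
  define v where "v = c *\<^sub>R u + d"
  have vs: "is_lasso_sol X lam betac (c *\<^sub>R w) v"
    unfolding is_lasso_sol_def
  proof
    fix b
    define ue where "ue e = (1/c) *\<^sub>R (((1-e) *\<^sub>R v + e *\<^sub>R b) - d)" for e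
    have "(ue \<longlongrightarrow> (1/c) *\<^sub>R (((1-0) *\<^sub>R v + 0 *\<^sub>R b) - d)) (at_right 0)"
      unfolding ue_def by (intro tendsto_intros)
    moreover have "(1/c) *\<^sub>R (((1-0) *\<^sub>R v + 0 *\<^sub>R b) - d) = u"
      unfolding v_def using c0 by simp
    ultimately have "(ue \<longlongrightarrow> u) (at_right 0)" by simp
    from Q_eventually[OF Qu[unfolded Q_def] this]
      eventually_at_right_real[of 0 1]
    have "eventually (\<lambda>e. Q (ue e) \<and> e \<in> {0<..<1}) (at_right 0)"
      unfolding Q_def by (auto intro: eventually_conj)
    then obtain e where e: "Q (ue e)" "0 < e" "e < 1"
      using eventually_happens'[OF trivial_limit_at_right_real] by fastforce
    have be: "(1-e) *\<^sub>R v + e *\<^sub>R b = c *\<^sub>R ue e + d"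
      unfolding ue_def using c0 by simp
    have "?G v = c * ?f u + lam * K0" unfolding v_def using objshift Qu by simp
    also have "\<dots> \<le> c * ?f (ue e) + lam * K0"
      using us c0 unfolding is_lasso_sol_def by simp
    also have "\<dots> = ?G ((1-e) *\<^sub>R v + e *\<^sub>R b)" using objshift e(1) be by simp
    also have "\<dots> \<le> (1-e) * ?G v + e * ?G b"
      using obj_conv[of e lam] e assms(5) by simp
    finally have "e * ?G v \<le> e * ?G b" by (simp add: algebra_simps)
    thus "?G v \<le> ?G b" using e(2) by simp
  qed
  have Rv: "lasso_resid X betac (c *\<^sub>R w) v = (c*k) *\<^sub>R ?r1"
    unfolding v_def lasso_resid_def residshift using Ru unfolding lasso_resid_def by simp
  let ?r2 = "lasso_resid X betac (c *\<^sub>R w) b2"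
  have b2s: "is_lasso_sol X lam betac (c *\<^sub>R w) b2" using assms(11) wc by simp
  have r2: "?r2 \<noteq> 0" using assms(13) wc by simp
  have par2: "norm ((c*k) *\<^sub>R ?r1) *\<^sub>R ?r2 = norm ?r2 *\<^sub>R ((c*k) *\<^sub>R ?r1)"
    using sol_parallel[OF vs b2s] assms(5) Rv by simp
  have ck: "c*k > 0" using c0 k0 by simp
  have "(1/(c*k)) *\<^sub>R (norm ((c*k) *\<^sub>R ?r1) *\<^sub>R ?r2) = (1/(c*k)) *\<^sub>R (norm ?r2 *\<^sub>R ((c*k) *\<^sub>R ?r1))"
    using par2 by simp
  hence "norm ?r1 *\<^sub>R ?r2 = norm ?r2 *\<^sub>R ?r1" using ck c0 k0 by simp
  from normalize_eq[OF r1 r2 this] show ?thesis unfolding wc w_def[symmetric] .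
qed

end
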